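(* Let $G$ be a finite graph, $X$ its graph C*-correspondence over $A=C(G^{(0)})$, and $\beta>0$. Then \[\operatorname{Tr}_\beta(A)=\{\tau\in\operatorname{Tr}(A):h_X^\tau<\beta\}\quad\text{and}\quad\operatorname{Avt}_\beta(A)=\{\tau\in\operatorname{Tr}(A):G^t\tau=e^\beta\tau\},\] where $\tau$ is identified with the vector $(\tau(p_{v_1}),\dots,\tau(p_{v_n}))^t$.
   Context: $G$ is a finite directed graph with vertices $v_1,\dots,v_n$, edges $G^{(1)}$, source/range maps $s,r$; adjacency matrix $G_{ij}=\#\{e:s(e)=v_i,r(e)=v_j\}$, $G^t$ its transpose. $A=C(G^{(0)})$ spanned by orthogonal projections $p_v$; $\operatorname{Tr}(A)$ its (tracial) states, i.e. probability vectors. The graph C*-correspondence $X$ is spanned by $x_e$, $e\in G^{(1)}$, with $\langle x_e,x_f\rangle=\delta_{e,f}p_{s(f)}$, $p_vx_e=\delta_{v,r(e)}x_e$, $x_ep_v=\delta_{s(e),v}x_e$; $\{x_e\}$ is a unit decomposition. For edge words $\mu=\mu_k\cdots\mu_1$, $x_\mu=x_{\mu_k}\otimes\cdots\otimes x_{\mu_1}$, $x_\emptyset=1$. $c_{\tau,\beta}=\sum_{k\ge0}e^{-k\beta}\sum_{|\mu|=k}\tau(\langle x_\mu,x_\mu\rangle)$; $\operatorname{Tr}_\beta(A)=\{\tau:c_{\tau,\beta}<\infty\}$; $\operatorname{Avt}_\beta(A)=\{\tau:\tau(a)=e^{-\beta}\sum_{e}\tau(\langle x_e,ax_e\rangle)\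 \forall a\in A\}$. $h_X^\tau=\limsup_k k^{-1}\log\sum_{|\mu|=k}\tau(\langle x_\mu,x_\mu\rangle)$, taken to be $0$ if the terms eventually vanish. *)

theory Defs
  imports "HOL-Analysis.Analysis"
begin

text \<open>Finite directed graph: vertices form a finite type 'v, edges a finite type 'e,
  with source and range maps s, r :: 'e \<Rightarrow> 'v.
  The coefficient algebra A = C(G^(0)) is 'v \<Rightarrow> complex (pointwise operations).\<close>

definition vproj :: "'v \<Rightarrow> 'v \<Rightarrow> complex" where
  "vproj v = (\<lambda>w. if w = v then 1 else 0)"

text \<open>Tracial states of A = probability vectors; evaluation of a state on a \<in> A.\<close>
definition is_state :: "('v::finite \<Rightarrow> real) \<Rightarrow> bool" where
  "is_state \<tau> \<longleftrightarrow> (\<forall>v. 0 \<le> \<tau> v) \<and> (\<Sum>v\<in>UNIV. \<tau> v) = 1"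

definition Tr_A :: "('v::finite \<Rightarrow> real) set" where
  "Tr_A = {\<tau>. is_state \<tau>}"

definition st_app :: "('v::finite \<Rightarrow> real) \<Rightarrow> ('v \<Rightarrow> complex) \<Rightarrow> complex" where
  "st_app \<tau> a = (\<Sum>v\<in>UNIV. complex_of_real (\<tau> v) * a v)"

text \<open>The A-valued inner product \<langle>x_e, a x_e\<rangle> = a(r e) p_{s e} in the graph correspondence
  (since a x_e = a(r e) x_e and \<langle>x_e,x_e\<rangle> = p_{s e}).\<close>
definition edge_ip :: "('e \<Rightarrow> 'v) \<Rightarrow> ('e \<Rightarrow> 'v) \<Rightarrow> 'e \<Rightarrow> ('v \<Rightarrow> complex) \<Rightarrow> ('v \<Rightarrow> complex)" where
  "edge_ip s r e a = (\<lambda>v. a (r e) * vproj (s e) v)"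

text \<open>Edge word \<mu> = \<mu>_k \<dots> \<mu>_1 is the list [\<mu>_k, ..., \<mu>_1]; x_\<mu> = x_{\<mu>_k} \<otimes> \<dots> \<otimes> x_{\<mu>_1}.
  word_ip s r \<mu> a = \<langle>x_\<mu>, a x_\<mu>\<rangle>, computed via the internal tensor product rule
  \<langle>x_e \<otimes> \<eta>, a (x_e \<otimes> \<eta>)\<rangle> = \<langle>\<eta>, \<langle>x_e, a x_e\<rangle> \<eta>\<rangle>, and x_[] = 1.\<close>
fun word_ip :: "('e \<Rightarrow> 'v) \<Rightarrow> ('e \<Rightarrow> 'v) \<Rightarrow> 'e list \<Rightarrow> ('v \<Rightarrow> complex) \<Rightarrow> ('v \<Rightarrow> complex)" where
  "word_ip s r [] a = a"
| "word_ip s r (e # \<nu>) a = word_ip s r \<nu> (edge_ip s r e a)"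

definition word_norm :: "('e \<Rightarrow> 'v) \<Rightarrow> ('e \<Rightarrow> 'v) \<Rightarrow> 'e list \<Rightarrow> ('v \<Rightarrow> complex)" where
  "word_norm s r \<mu> = word_ip s r \<mu> (\<lambda>_. 1)"

text \<open>\<Sum>_{|\<mu>|=k} \<tau>(\<langle>x_\<mu>,x_\<mu>\<rangle>) (a nonnegative real number; we take its real part).\<close>
definition level_sum :: "('e::finite \<Rightarrow> 'v::finite) \<Rightarrow> ('e \<Rightarrow> 'v) \<Rightarrow> ('v \<Rightarrow> real) \<Rightarrow> nat \<Rightarrow> real" where
  "level_sum s r \<tau> k = Re (\<Sum>\<mu>\<in>{\<mu>::'e list. length \<mu> = k}. st_app \<tau> (word_norm s r \<mu>))"

text \<open>Tr_\<beta>(A): states with c_{\<tau>,\<beta>} = \<Sum>_k e^{-k\<beta>} level_sum k finite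
  (nonnegative terms, so finiteness = summability).\<close>
definition Tr_beta :: "('e::finite \<Rightarrow> 'v::finite) \<Rightarrow> ('e \<Rightarrow> 'v) \<Rightarrow> real \<Rightarrow> ('v \<Rightarrow> real) set" where
  "Tr_beta s r \<beta> = {\<tau> \<in> Tr_A. summable (\<lambda>k. exp (- real k * \<beta>) * level_sum s r \<tau> k)}"

definition Avt_beta :: "('e::finite \<Rightarrow> 'v::finite) \<Rightarrow> ('e \<Rightarrow> 'v) \<Rightarrow> real \<Rightarrow> ('v \<Rightarrow> real) set" where
  "Avt_beta s r \<beta> = {\<tau> \<in> Tr_A. \<forall>a :: 'v \<Rightarrow> complex.
      st_app \<tau> a = complex_of_real (exp (- \<beta>)) * (\<Sum>e\<in>UNIV. st_app \<tau> (edge_ip s r e a))}"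

definition entropy :: "('e::finite \<Rightarrow> 'v::finite) \<Rightarrow> ('e \<Rightarrow> 'v) \<Rightarrow> ('v \<Rightarrow> real) \<Rightarrow> ereal" where
  "entropy s r \<tau> =
     (if (\<forall>\<^sub>F k in sequentially. level_sum s r \<tau> k = 0) then 0
      else limsup (\<lambda>k. ereal (ln (level_sum s r \<tau> k) / real k)))"

definition adj :: "('e::finite \<Rightarrow> 'v) \<Rightarrow> ('e \<Rightarrow> 'v) \<Rightarrow> 'v \<Rightarrow> 'v \<Rightarrow> nat" where
  "adj s r i j = card {e. s e = i \<and> r e = j}"

definition adj_transpose_apply :: "('e::finite \<Rightarrow> 'v::finite) \<Rightarrow> ('e \<Rightarrow> 'v) \<Rightarrow> ('v \<Rightarrow> real) \<Rightarrow> ('v \<Rightarrow> real)" where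
  "adj_transpose_apply s r \<tau> = (\<lambda>j. \<Sum>i\<in>UNIV. real (adj s r i j) * \<tau> i)"

end

theory Submission
  imports Defs
begin

definition Trn :: "('e::finite \<Rightarrow> 'v) \<Rightarrow> ('e \<Rightarrow> 'v) \<Rightarrow> ('v \<Rightarrow> real) \<Rightarrow> ('v \<Rightarrow> real)" where
  "Trn s r f = (\<lambda>v. \<Sum>e\<in>UNIV. if s e = v then f (r e) else 0)"

definition TC :: "('e::finite \<Rightarrow> 'v) \<Rightarrow> ('e \<Rightarrow> 'v) \<Rightarrow> ('v \<Rightarrow> complex) \<Rightarrow> ('v \<Rightarrow> complex)" where
  "TC s r a = (\<lambda>v. \<Sum>e\<in>UNIV. edge_ip s r e a v)"

lemma word_ip_sum:
  "finite I \<Longrightarrow> word_ip s r \<nu> (\<lambda>v. \<Sum>i\<in>I. g i v) = (\<lambda>v. \<Sum>i\<in>I. word_ip s r \<nu> (g i) v)"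
proof (induction \<nu> arbitrary: g)
  case Nil
  then show ?case by simp
next
  case (Cons e \<nu>)
  have "edge_ip s r e (\<lambda>v. \<Sum>i\<in>I. g i v) = (\<lambda>v. \<Sum>i\<in>I. edge_ip s r e (g i) v)"
    by (simp add: edge_ip_def sum_distrib_right)
  then show ?case using Cons by simp
qed

lemma finite_len: "finite {\<mu>::('e::finite) list. length \<mu> = k}"
  using finite_lists_length_eq[of "UNIV::'e set" k] by simp

lemma len_Suc_eq: "{\<mu>::'e list. length \<mu> = Suc k} = (\<lambda>(e,\<nu>). e # \<nu>) ` (UNIV \<times> {\<nu>. length \<nu> = k})"
  by (auto simp: length_Suc_conv image_def)

lemma sum_word_ip:
  "(\<Sum>\<mu>\<in>{\<mu>::('e::finite) list. length \<mu> = k}. word_ip s r \<mu> a v) = ((TC s r)^^k) a v"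
proof (induction k arbitrary: a v)
  case 0
  have "{\<mu>::'e list. length \<mu> = 0} = {[]}" by auto
  then show ?case by simp
next
  case (Suc k)
  have inj: "inj_on (\<lambda>(e,\<nu>). e # \<nu>) (UNIV \<times> {\<nu>::'e list. length \<nu> = k})"
    by (auto simp: inj_on_def)
  have "(\<Sum>\<mu>\<in>{\<mu>::'e list. length \<mu> = Suc k}. word_ip s r \<mu> a v)
      = (\<Sum>p\<in>UNIV \<times> {\<nu>::'e list. length \<nu> = k}. word_ip s r (fst p # snd p) a v)"
    unfolding len_Suc_eq by (subst sum.reindex[OF inj]) (simp add: case_prod_beta)
  also have "\<dots> = (\<Sum>e\<in>UNIV. \<Sum>\<nu>\<in>{\<nu>::'e list. length \<nu> = k}. word_ip s r \<nu> (edge_ip s r e a) v)"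
    by (simp add: sum.cartesian_product split_def)
  also have "\<dots> = (\<Sum>\<nu>\<in>{\<nu>::'e list. length \<nu> = k}. \<Sum>e\<in>UNIV. word_ip s r \<nu> (edge_ip s r e a) v)"
    by (rule sum.swap)
  also have "\<dots> = (\<Sum>\<nu>\<in>{\<nu>::'e list. length \<nu> = k}. word_ip s r \<nu> (TC s r a) v)"
    unfolding TC_def by (simp add: word_ip_sum)
  also have "\<dots> = ((TC s r)^^k) (TC s r a) v" by (rule Suc.IH)
  finally show ?case by (simp add: funpow_Suc_right del: funpow.simps)
qed

lemma TC_real: "TC s r (\<lambda>v. complex_of_real (f v)) = (\<lambda>v. complex_of_real (Trn s r f v))"
  unfolding TC_def Trn_def edge_ip_def vproj_def
  by (auto intro!: sum.cong simp: if_distrib)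

lemma TC_pow_real: "((TC s r)^^k) (\<lambda>v. complex_of_real (f v)) = (\<lambda>v. complex_of_real (((Trn s r)^^k) f v))"
  by (induction k) (simp_all add: TC_real)

lemma level_sum_eq:
  "level_sum s r \<tau> k = (\<Sum>v\<in>UNIV. \<tau> v * ((Trn s r)^^k) (\<lambda>_. 1) v)"
proof -
  have "(\<Sum>\<mu>\<in>{\<mu>::'a list. length \<mu> = k}. st_app \<tau> (word_norm s r \<mu>))
     = (\<Sum>v\<in>UNIV. complex_of_real (\<tau> v) * (\<Sum>\<mu>\<in>{\<mu>::'a list. length \<mu> = k}. word_ip s r \<mu> (\<lambda>_. 1) v))"
    unfolding st_app_def word_norm_def by (simp add: sum_distrib_left sum.swap[of _ UNIV])
  also have "\<dots> = (\<Sum>v\<in>UNIV. complex_of_real (\<tau> v) * ((TC s r)^^k) (\<lambda>v. complex_of_real 1) v)"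
    by (simp add: sum_word_ip)
  also have "\<dots> = complex_of_real (\<Sum>v\<in>UNIV. \<tau> v * ((Trn s r)^^k) (\<lambda>_. 1) v)"
    by (simp only: TC_pow_real) simp
  finally show ?thesis unfolding level_sum_def by simp
qed

lemma adjT_eq: "adj_transpose_apply s r \<tau> j = (\<Sum>e\<in>UNIV. if r e = j then \<tau> (s e) else 0)"
proof -
  have "adj_transpose_apply s r \<tau> j = (\<Sum>i\<in>UNIV. \<Sum>e\<in>UNIV. if s e = i \<and> r e = j then \<tau> i else 0)"
    unfolding adj_transpose_apply_def adj_def
    by (simp add: sum.If_cases[of UNIV] Int_def)
  also have "\<dots> = (\<Sum>e\<in>UNIV. \<Sum>i\<in>UNIV. if s e = i \<and> r e = j then \<tau> i else 0)"
    by (rule sum.swap)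
  also have "\<dots> = (\<Sum>e\<in>UNIV. if r e = j then \<tau> (s e) else 0)"
    by (rule sum.cong) (auto simp: if_distrib[symmetric] sum.delta)
  finally show ?thesis .
qed

lemma edge_sum_eq: "(\<Sum>e\<in>UNIV. st_app \<tau> (edge_ip s r e a)) = (\<Sum>e\<in>UNIV. complex_of_real (\<tau> (s e)) * a (r e))"
  unfolding st_app_def edge_ip_def vproj_def
  by (rule sum.cong) (auto simp: if_distrib cong: if_cong)

lemma avt_part:
  fixes s r :: "'e::finite \<Rightarrow> 'v::finite"
  shows "Avt_beta s r \<beta> = {\<tau> \<in> Tr_A. adj_transpose_apply s r \<tau> = (\<lambda>v. exp \<beta> * \<tau> v)}"
proof (intro set_eqI iffI)
  fix \<tau> assume "\<tau> \<in> Avt_beta s r \<beta>"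
  then have T: "\<tau> \<in> Tr_A" and H: "\<And>a. st_app \<tau> a = complex_of_real (exp (- \<beta>)) *
      (\<Sum>e\<in>UNIV. complex_of_real (\<tau> (s e)) * a (r e))"
    unfolding Avt_beta_def by (auto simp: edge_sum_eq)
  have "adj_transpose_apply s r \<tau> j = exp \<beta> * \<tau> j" for j
  proof -
    have "st_app \<tau> (vproj j) = complex_of_real (\<tau> j)"
      unfolding st_app_def vproj_def by (simp add: if_distrib cong: if_cong)
    moreover have "(\<Sum>e\<in>UNIV. complex_of_real (\<tau> (s e)) * vproj j (r e))
        = complex_of_real (adj_transpose_apply s r \<tau> j)"
      unfolding adjT_eq vproj_def by (simp add: if_distrib cong: if_cong)
    ultimately have "complex_of_real (\<tau> j) = complex_of_real (exp (- \<beta>) * adj_transpose_apply s r \<tau> j)"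
      using H[of "vproj j"] by simp
    then have "\<tau> j = exp (- \<beta>) * adj_transpose_apply s r \<tau> j" using of_real_eq_iff by blast
    then show ?thesis by (simp add: exp_minus field_simps)
  qed
  then show "\<tau> \<in> {\<tau> \<in> Tr_A. adj_transpose_apply s r \<tau> = (\<lambda>v. exp \<beta> * \<tau> v)}" using T by auto
next
  fix \<tau> assume "\<tau> \<in> {\<tau> \<in> Tr_A. adj_transpose_apply s r \<tau> = (\<lambda>v. exp \<beta> * \<tau> v)}"
  then have T: "\<tau> \<in> Tr_A" and H: "\<And>j. \<tau> j = exp (- \<beta>) * (\<Sum>e\<in>UNIV. if r e = j then \<tau> (s e) else 0)"
    by (auto simp: adjT_eq[symmetric] exp_minus field_simps dest: fun_cong)
  have "st_app \<tau> a = complex_of_real (exp (- \<beta>)) * (\<Sum>e\<in>UNIV. complex_of_real (\<tau> (s e)) * a (r e))" for a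
  proof -
    have "st_app \<tau> a = (\<Sum>j\<in>UNIV. complex_of_real (exp (- \<beta>)) * (\<Sum>e\<in>UNIV. if r e = j then complex_of_real (\<tau> (s e)) * a j else 0))"
      unfolding st_app_def
      apply (subst H)
      apply (rule sum.cong, simp)
      apply (simp add: mult.assoc sum_distrib_right)
      apply (rule sum.cong, auto)
      done
    also have "\<dots> = complex_of_real (exp (- \<beta>)) * (\<Sum>e\<in>UNIV. \<Sum>j\<in>UNIV. if r e = j then complex_of_real (\<tau> (s e)) * a j else 0)"
      by (simp add: sum_distrib_left[symmetric] sum.swap[of _ UNIV])
    also have "\<dots> = complex_of_real (exp (- \<beta>)) * (\<Sum>e\<in>UNIV. complex_of_real (\<tau> (s e)) * a (r e))"
      by (simp add: sum.delta)
    finally show ?thesis .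
  qed
  then show "\<tau> \<in> Avt_beta s r \<beta>" using T unfolding Avt_beta_def by (auto simp: edge_sum_eq)
qed

lemma ent_lt:
  fixes L :: "nat \<Rightarrow> real"
  assumes L0: "\<And>k. 0 \<le> L k" and LM: "\<And>k. L k \<le> M * c^k" and M1: "1 \<le> M"
    and c0: "0 < c" and cb: "c < exp \<beta>" and b0: "\<beta> > 0"
  shows "(if (\<forall>\<^sub>F k in sequentially. L k = 0) then 0
      else limsup (\<lambda>k. ereal (ln (L k) / real k))) < ereal \<beta>"
proof -
  define b where "b = max 0 (ln c)"
  have lnc: "ln c < \<beta>" using cb c0 by (metis ln_exp ln_less_cancel_iff exp_gt_zero)
  have bb: "b < \<beta>" using lnc b0 by (simp add: b_def)
  have bound: "ln (L k) / real k \<le> max 0 (ln M / real k + ln c)" for k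
  proof (cases "L k > 0 \<and> k > 0")
    case True
    have "ln (L k) \<le> ln (M * c^k)" using True LM[of k] by (simp)
    also have "\<dots> = ln M + real k * ln c" using M1 c0 by (simp add: ln_mult ln_realpow)
    finally have "ln (L k) / real k \<le> (ln M + real k * ln c) / real k"
      using True by (simp add: divide_right_mono)
    also have "\<dots> = ln M / real k + ln c" using True by (simp add: field_simps)
    finally show ?thesis by simp
  next
    case False
    then have "L k = 0 \<or> k = 0" using L0[of k] by auto
    then show ?thesis by auto
  qed
  have lim: "(\<lambda>k. ereal (max 0 (ln M / real k + ln c))) \<longlonglongrightarrow> ereal b"
    unfolding lim_ereal b_def
    by (intro tendsto_max tendsto_const) (auto intro!: tendsto_eq_intros lim_const_over_n)
  have "limsup (\<lambda>k. ereal (ln (L k) / real k)) \<le> limsup (\<lambda>k. ereal (max 0 (ln M / real k + ln c)))"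
    by (intro Limsup_mono always_eventually allI) (subst ereal_less_eq(3), rule bound)
  also have "\<dots> = ereal b" by (rule lim_imp_Limsup[OF _ lim]) simp
  finally have "limsup (\<lambda>k. ereal (ln (L k) / real k)) \<le> ereal b" .
  then have "limsup (\<lambda>k. ereal (ln (L k) / real k)) < ereal \<beta>"
    using bb by (meson less_ereal.simps(1) order.strict_trans1)
  then show ?thesis using b0 by auto
qed

lemma summ_of_ent:
  fixes L :: "nat \<Rightarrow> real"
  assumes L0: "\<And>k. 0 \<le> L k"
    and H: "(if (\<forall>\<^sub>F k in sequentially. L k = 0) then 0
      else limsup (\<lambda>k. ereal (ln (L k) / real k))) < ereal \<beta>"
  shows "summable (\<lambda>k. exp (- real k * \<beta>) * L k)"
proof (cases "\<forall>\<^sub>F k in sequentially. L k = 0")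
  case True
  then have "\<forall>\<^sub>F k in sequentially. exp (- real k * \<beta>) * L k = 0"
    by (rule eventually_mono) simp
  then show ?thesis using summable_cong[of "\<lambda>k. exp (- real k * \<beta>) * L k" "\<lambda>_. 0"] by simp
next
  case False
  then have "limsup (\<lambda>k. ereal (ln (L k) / real k)) < ereal \<beta>" using H by simp
  then obtain b' where b1: "limsup (\<lambda>k. ereal (ln (L k) / real k)) < ereal b'" and b2: "b' < \<beta>"
    using ereal_dense2 by (metis less_ereal.simps(1))
  have ev: "\<forall>\<^sub>F k in sequentially. ereal (ln (L k) / real k) < ereal b'"
    using Limsup_lessD[OF b1] .
  have "\<forall>\<^sub>F k in sequentially. norm (exp (- real k * \<beta>) * L k) \<le> exp (b' - \<beta>) ^ k"
    using ev eventually_gt_at_top[of 0]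
  proof eventually_elim
    case (elim k)
    have Lk: "L k \<le> exp (real k * b')"
    proof (cases "L k > 0")
      case True
      have "ln (L k) < real k * b'" using elim by (simp add: divide_less_eq mult.commute)
      then have "exp (ln (L k)) < exp (real k * b')" by simp
      then show ?thesis using True by simp
    next
      case False then show ?thesis using L0[of k] by (metis exp_ge_zero order.trans not_le)
    qed
    have "norm (exp (- real k * \<beta>) * L k) = exp (- real k * \<beta>) * L k" using L0[of k] by simp
    also have "\<dots> \<le> exp (- real k * \<beta>) * exp (real k * b')" using Lk by simp
    also have "\<dots> = exp (real k * (b' - \<beta>))" by (simp add: exp_add[symmetric] algebra_simps)
    also have "\<dots> = exp (b' - \<beta>) ^ k" by (rule exp_of_nat_mult)
    finally show ?case .
  qed
  moreover have "summable (\<lambda>k. exp (b' - \<beta>) ^ k)" using b2 by (intro summable_geometric) simp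
  ultimately show ?thesis by (rule summable_comparison_test_ev)
qed

lemma P_nonneg: "0 \<le> ((Trn s r)^^k) (\<lambda>_. 1) v"
  by (induction k arbitrary: v) (auto simp: Trn_def intro!: sum_nonneg)

lemma Trn_ge:
  assumes "s e = w" "\<And>u. 0 \<le> f u"
  shows "f (r e) \<le> Trn s r f w"
proof -
  have "f (r e) = (if s e = w then f (r e) else 0)" using assms by simp
  also have "\<dots> \<le> Trn s r f w" unfolding Trn_def
    by (rule member_le_sum[of e UNIV "\<lambda>e. if s e = w then f (r e) else 0"]) (auto simp: assms)
  finally show ?thesis .
qed

lemma core_bound:
  fixes s r :: "'e::finite \<Rightarrow> 'v::finite"
  assumes T: "\<tau> \<in> Tr_A" and S: "summable (\<lambda>k. exp (- real k * \<beta>) * level_sum s r \<tau> k)"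
  shows "\<exists>M c. 1 \<le> M \<and> 0 < c \<and> c < exp \<beta> \<and> (\<forall>k. level_sum s r \<tau> k \<le> M * c^k)"
proof -
  define P where "P k = ((Trn s r)^^k) (\<lambda>_. 1)" for k
  define t where "t = exp (- \<beta>)"
  have t0: "t > 0" by (simp add: t_def)
  have P0: "0 \<le> P k v" for k v unfolding P_def by (rule P_nonneg)
  have PS: "P (Suc k) = Trn s r (P k)" for k unfolding P_def by simp
  have PZ: "P 0 v = 1" for v unfolding P_def by simp
  have tau0: "0 \<le> \<tau> v" for v using T by (simp add: Tr_A_def is_state_def)
  have tau1: "(\<Sum>v\<in>UNIV. \<tau> v) = 1" using T by (simp add: Tr_A_def is_state_def)
  define L where "L k = level_sum s r \<tau> k" for k
  have LP: "L k = (\<Sum>v\<in>UNIV. \<tau> v * P k v)" for k unfolding L_def P_def by (rule level_sum_eq)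
  have et: "exp (- real k * \<beta>) = t ^ k" for k
    unfolding t_def using exp_of_nat_mult[of k "-\<beta>"] by simp
  have SL: "summable (\<lambda>k. t^k * L k)" using S by (simp only: et L_def)
  define R where "R = {w. summable (\<lambda>m. t^m * P m w)}"
  have supp: "v \<in> R" if "\<tau> v > 0" for v
  proof -
    have "\<tau> v * P m v \<le> L m" for m
      unfolding LP by (rule member_le_sum[of v UNIV "\<lambda>v. \<tau> v * P m v"]) (auto intro: mult_nonneg_nonneg tau0 P0)
    then have "norm (t^m * P m v) \<le> t^m * L m / \<tau> v" for m
      using that t0 P0[of m v] by (simp add: field_simps mult_left_mono)
    moreover have "summable (\<lambda>m. t^m * L m / \<tau> v)" using SL by (rule summable_divide)
    ultimately show ?thesis unfolding R_def by (blast intro: summable_comparison_test')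
  qed
  have succ: "r e \<in> R" if "w \<in> R" "s e = w" for w e
  proof -
    have "P m (r e) \<le> P (Suc m) w" for m unfolding PS by (rule Trn_ge[of s e w "P m" r, OF that(2)]) (rule P0)
    then have "norm (t^m * P m (r e)) \<le> (t^(Suc m) * P (Suc m) w) / t" for m
      using t0 P0[of m "r e"] by (simp add: field_simps mult_left_mono)
    moreover have "summable (\<lambda>m. (t^(Suc m) * P (Suc m) w) / t)"
      using that(1) unfolding R_def by (intro summable_divide) (subst summable_Suc_iff[of "\<lambda>m. t^m * P m w"], simp)
    ultimately show ?thesis unfolding R_def by (blast intro: summable_comparison_test')
  qed
  define f where "f w = (if w \<in> R then (\<Sum>m. t^m * P m w) else 0)" for w
  have f0: "0 \<le> f w" for w unfolding f_def R_def
    using t0 P0 by (auto intro!: suminf_nonneg)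
  have frec: "f w - 1 = t * Trn s r f w" if "w \<in> R" for w
  proof -
    have sw: "summable (\<lambda>m. t^m * P m w)" using that R_def by simp
    have sume: "summable (\<lambda>m. if s e = w then t^m * P m (r e) else 0)" for e
      by (cases "s e = w") (use succ[OF that] R_def in auto)
    have "f w - 1 = (\<Sum>m. t^(Suc m) * P (Suc m) w)"
      using suminf_split_head[OF sw] that by (simp add: f_def PZ)
    also have "\<dots> = (\<Sum>m. t * (\<Sum>e\<in>UNIV. if s e = w then t^m * P m (r e) else 0))"
      by (simp add: PS Trn_def sum_distrib_left if_distrib mult.assoc cong: if_cong)
    also have "\<dots> = t * (\<Sum>m. \<Sum>e\<in>UNIV. if s e = w then t^m * P m (r e) else 0)"
      by (rule suminf_mult) (intro summable_sum sume)
    also have "\<dots> = t * (\<Sum>e\<in>UNIV. \<Sum>m. if s e = w then t^m * P m (r e) else 0)"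
      by (subst suminf_sum) (use sume in auto)
    also have "\<dots> = t * Trn s r f w"
      unfolding Trn_def f_def using succ[OF that] by (auto intro!: sum.cong)
    finally show ?thesis .
  qed
  have f1: "1 \<le> f w" if "w \<in> R" for w
  proof -
    have "0 \<le> Trn s r f w" unfolding Trn_def using f0 by (auto intro!: sum_nonneg)
    then show ?thesis using frec[OF that] t0 by (smt (verit) mult_nonneg_nonneg)
  qed
  define M where "M = 1 + (\<Sum>w\<in>UNIV. f w)"
  have fM: "f w \<le> M" for w
    using member_le_sum[of w UNIV f] f0 unfolding M_def by auto
  have M1: "1 \<le> M" using f0 unfolding M_def by (simp add: sum_nonneg)
  define c where "c = (1 - 1 / (2*M)) / t"
  have c0: "0 < c" using M1 t0 unfolding c_def by (simp add: field_simps)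
  have cb: "c < exp \<beta>" using M1 unfolding c_def t_def by (simp add: exp_minus field_simps)
  have fstep: "Trn s r f w \<le> c * f w" if "w \<in> R" for w
  proof -
    have "f w / (2*M) \<le> 1" using fM[of w] M1 by (simp add: field_simps)
    then have "f w - 1 \<le> (1 - 1/(2*M)) * f w" by (simp add: field_simps)
    then have "t * Trn s r f w \<le> (1 - 1/(2*M)) * f w" using frec[OF that] by simp
    then show ?thesis using t0 unfolding c_def by (simp add: field_simps)
  qed
  have Pb: "\<forall>w\<in>R. P k w \<le> c^k * f w" for k
  proof (induction k)
    case 0
    then show ?case using f1 by (simp add: PZ)
  next
    case (Suc k)
    show ?case
    proof
      fix w assume w: "w \<in> R"
      have "P (Suc k) w = (\<Sum>e\<in>UNIV. if s e = w then P k (r e) else 0)" by (simp add: PS Trn_def)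
      also have "\<dots> \<le> (\<Sum>e\<in>UNIV. if s e = w then c^k * f (r e) else 0)"
        by (rule sum_mono) (use Suc succ[OF w] in auto)
      also have "\<dots> = c^k * Trn s r f w"
        by (simp add: Trn_def sum_distrib_left if_distrib cong: if_cong)
      also have "\<dots> \<le> c^k * (c * f w)" using fstep[OF w] c0 by (simp add: mult_left_mono)
      finally show "P (Suc k) w \<le> c^(Suc k) * f w" by (simp add: mult_ac)
    qed
  qed
  have "L k \<le> M * c^k" for k
  proof -
    have "L k \<le> (\<Sum>v\<in>UNIV. \<tau> v * (M * c^k))"
      unfolding LP
    proof (rule sum_mono)
      fix v
      show "\<tau> v * P k v \<le> \<tau> v * (M * c^k)"
      proof (cases "\<tau> v > 0")
        case True
        have "P k v \<le> c^k * f v" using Pb supp[OF True] by blast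
        also have "\<dots> \<le> c^k * M" using fM[of v] c0 by (simp add: mult_left_mono)
        finally show ?thesis using True by (simp add: mult_left_mono mult.commute)
      next
        case False then show ?thesis using tau0[of v] by simp
      qed
    qed
    also have "\<dots> = M * c^k" by (simp add: sum_distrib_right[symmetric] tau1)
    finally show ?thesis .
  qed
  then show ?thesis using M1 c0 cb unfolding L_def by blast
qed

lemma level_nonneg: "\<tau> \<in> Tr_A \<Longrightarrow> 0 \<le> level_sum s r \<tau> k"
  unfolding level_sum_eq
  by (auto intro!: sum_nonneg mult_nonneg_nonneg P_nonneg simp: Tr_A_def is_state_def)

theorem corollary8p7:
  fixes s r :: "'e::finite \<Rightarrow> 'v::finite" and \<beta> :: real
  assumes "\<beta> > 0"
  shows "Tr_beta s r \<beta> = {\<tau> \<in> Tr_A. entropy s r \<tau> < ereal \<beta>}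
     \<and> Avt_beta s r \<beta> = {\<tau> \<in> Tr_A. adj_transpose_apply s r \<tau> = (\<lambda>v. exp \<beta> * \<tau> v)}"
proof
  show "Tr_beta s r \<beta> = {\<tau> \<in> Tr_A. entropy s r \<tau> < ereal \<beta>}"
  proof (intro set_eqI iffI)
    fix \<tau> assume "\<tau> \<in> Tr_beta s r \<beta>"
    then have T: "\<tau> \<in> Tr_A" and S: "summable (\<lambda>k. exp (- real k * \<beta>) * level_sum s r \<tau> k)"
      unfolding Tr_beta_def by auto
    obtain M c where "1 \<le> M" "0 < c" "c < exp \<beta>" "\<forall>k. level_sum s r \<tau> k \<le> M * c^k"
      using core_bound[OF T S] by blast
    then have "entropy s r \<tau> < ereal \<beta>"
      unfolding entropy_def using ent_lt[of "level_sum s r \<tau>" M c \<beta>] level_nonneg[OF T] assms by blast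
    then show "\<tau> \<in> {\<tau> \<in> Tr_A. entropy s r \<tau> < ereal \<beta>}" using T by simp
  next
    fix \<tau> assume "\<tau> \<in> {\<tau> \<in> Tr_A. entropy s r \<tau> < ereal \<beta>}"
    then have T: "\<tau> \<in> Tr_A" and E: "entropy s r \<tau> < ereal \<beta>" by auto
    have "summable (\<lambda>k. exp (- real k * \<beta>) * level_sum s r \<tau> k)"
      by (rule summ_of_ent[OF level_nonneg[OF T]]) (use E in \<open>simp add: entropy_def\<close>)
    then show "\<tau> \<in> Tr_beta s r \<beta>" using T unfolding Tr_beta_def by simp
  qed
next
  show "Avt_beta s r \<beta> = {\<tau> \<in> Tr_A. adj_transpose_apply s r \<tau> = (\<lambda>v. exp \<beta> * \<tau> v)}"
    by (rule avt_part)
qed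

end
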